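(* Let $\lambda,\mu\geq 0$ be real with $(\lambda,\mu)\neq(1,1)$, and for each positive integer $w$ let $$D_w(p)=(1-\lambda^2p^2)(1-\mu^2p^2)-(\lambda^2-p^2)(\mu^2-p^2)p^{2w}.$$ Then for every positive integer $w$, all zeros of $D_w$ other than $p=\pm1$ are simple, and there is at most one positive integer $w$ for which $p=\pm 1$ is a multiple zero of $D_w$.
   Context: $D_w(p)$ is the denominator polynomial of the generating function of loops (directed paths with steps $(1,\pm1)$ starting and ending on the line $y=0$ and confined to the strip $0\le y\le w$), with wall weights $a=1+\lambda^2$ on the bottom wall and $b=1+\mu^2$ on the top wall. *)

theory Defs
  imports Complex_Main "HOL-Computational_Algebra.Polynomial"
begin

definition Dpoly :: "real \<Rightarrow> real \<Rightarrow> nat \<Rightarrow> complex poly" where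
  "Dpoly lam mu w =
     [:1, 0, - complex_of_real (lam^2):] * [:1, 0, - complex_of_real (mu^2):]
     - [:complex_of_real (lam^2), 0, -1:] * [:complex_of_real (mu^2), 0, -1:]
       * monom 1 (2 * w)"

end

theory Submission
  imports Defs
begin

fun P :: "(nat \<Rightarrow> real) \<Rightarrow> nat \<Rightarrow> complex \<Rightarrow> complex" where
  "P e 0 z = 1"
| "P e (Suc 0) z = z"
| "P e (Suc (Suc k)) z = z * P e (Suc k) z - of_real (e k) * P e k z"

fun Pd :: "(nat \<Rightarrow> real) \<Rightarrow> nat \<Rightarrow> complex \<Rightarrow> complex" where
  "Pd e 0 z = 0"
| "Pd e (Suc 0) z = 1"
| "Pd e (Suc (Suc k)) z = P e (Suc k) z + z * Pd e (Suc k) z - of_real (e k) * Pd e k z"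

definition gam :: "(nat \<Rightarrow> real) \<Rightarrow> nat \<Rightarrow> real" where
  "gam e k = (\<Prod>j<k. e j)"

lemma gam_pos: "(\<And>j. e j > 0) \<Longrightarrow> gam e k > 0"
  unfolding gam_def by (rule prod_pos) auto

lemma gam_Suc: "gam e (Suc k) = gam e k * e k"
  unfolding gam_def by simp

lemma P_deriv: "(P e k has_field_derivative Pd e k z) (at z)"
proof (induction e k z rule: P.induct)
  case (3 e k z)
  show ?case unfolding P.simps Pd.simps
    by (rule derivative_eq_intros 3 | simp)+
qed (auto intro!: derivative_eq_intros)

lemma P_cnj: "P e k (cnj z) = cnj (P e k z)"
  by (induction e k z rule: P.induct) auto

lemma CD1:
  assumes "\<And>j. e j > 0"
  shows "(a - b) * (\<Sum>k\<le>m. P e k a * P e k b / of_real (gam e k))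
       = (P e (Suc m) a * P e m b - P e m a * P e (Suc m) b) / of_real (gam e m)"
proof (induction m)
  case 0
  then show ?case by (simp add: gam_def)
next
  case (Suc m)
  have g: "gam e m > 0" by (rule gam_pos[OF assms])
  have em: "e m > 0" by (rule assms)
  have "(a - b) * (\<Sum>k\<le>Suc m. P e k a * P e k b / of_real (gam e k))
     = (a - b) * (\<Sum>k\<le>m. P e k a * P e k b / of_real (gam e k))
       + (a - b) * (P e (Suc m) a * P e (Suc m) b / of_real (gam e (Suc m)))"
    by (simp add: algebra_simps)
  also have "\<dots> = (P e (Suc (Suc m)) a * P e (Suc m) b - P e (Suc m) a * P e (Suc (Suc m)) b) / of_real (gam e (Suc m))"
    unfolding Suc gam_Suc using g em
    by (simp add: field_simps)
  finally show ?case .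
qed

lemma CD2:
  assumes "\<And>j. e j > 0"
  shows "(\<Sum>k\<le>m. P e k a * P e k a / of_real (gam e k))
       = (Pd e (Suc m) a * P e m a - Pd e m a * P e (Suc m) a) / of_real (gam e m)"
proof (induction m)
  case 0
  then show ?case by (simp add: gam_def)
next
  case (Suc m)
  have g: "gam e m > 0" by (rule gam_pos[OF assms])
  have em: "e m > 0" by (rule assms)
  have "(\<Sum>k\<le>Suc m. P e k a * P e k a / of_real (gam e k))
     = (\<Sum>k\<le>m. P e k a * P e k a / of_real (gam e k))
       + (P e (Suc m) a * P e (Suc m) a / of_real (gam e (Suc m)))"
    by (simp add: algebra_simps)
  also have "\<dots> = (Pd e (Suc (Suc m)) a * P e (Suc m) a - Pd e (Suc m) a * P e (Suc (Suc m)) a) / of_real (gam e (Suc m))"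
    unfolding Suc gam_Suc using g em
    by (simp add: field_simps)
  finally show ?case .
qed


definition ew :: "real \<Rightarrow> real \<Rightarrow> nat \<Rightarrow> nat \<Rightarrow> real" where
  "ew L M w k = (if k = 0 then 1 + L else 1) * (if Suc k = w then 1 + M else 1)"

lemma ew_pos: "L \<ge> 0 \<Longrightarrow> M \<ge> 0 \<Longrightarrow> ew L M w k > 0"
  unfolding ew_def by auto

definition T :: "(nat \<Rightarrow> real) \<Rightarrow> nat \<Rightarrow> complex \<Rightarrow> complex" where
  "T e k p = (p^2 - 1) * p^k * P e k (p + 1/p)"

lemma T_rec: "p \<noteq> 0 \<Longrightarrow> T e (Suc (Suc k)) p = (p^2+1) * T e (Suc k) p - of_real (e k) * p^2 * T e k p"
  unfolding T_def by (simp add: field_simps power2_eq_square)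

lemma T0: "T e 0 p = p^2 - 1" unfolding T_def by simp
lemma T1: "p \<noteq> 0 \<Longrightarrow> T e (Suc 0) p = p^4 - 1" unfolding T_def by (simp add: field_simps power2_eq_square power4_eq_xxxx)

lemma T2: "p \<noteq> 0 \<Longrightarrow> T e (Suc (Suc 0)) p = (p^2+1)*(p^4-1) - of_real (e 0) * p^2 * (p^2-1)"
  using T_rec[of p e 0] T1[of p e] T0[of e p] by simp

lemma pS: "(p::complex)^(2*Suc j) = p^(2*j)*p^2"
proof -
  have "2*Suc j = 2*j+2" by simp
  then show ?thesis by (simp only: power_add)
qed

lemma T_closed:
  assumes p: "p \<noteq> 0" and "Suc (Suc j) \<le> w"
  shows "T (ew L M w) (Suc j) p = p^(2*j)*p^4 - 1 - of_real L * (p^(2*j)*p^2 - p^2)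
       \<and> T (ew L M w) (Suc (Suc j)) p = p^(2*j)*p^6 - 1 - of_real L * (p^(2*j)*p^4 - p^2)"
  using assms(2)
proof (induction j)
  case 0
  have e0: "ew L M w 0 = 1 + L" using 0 unfolding ew_def by auto
  have a: "T (ew L M w) (Suc 0) p = p^4 - 1 - of_real L * (p^2 - p^2)" unfolding T1[OF p] by simp
  have b: "T (ew L M w) (Suc (Suc 0)) p = p^6 - 1 - of_real L * (p^4 - p^2)"
    unfolding T2[OF p] e0 of_real_add of_real_1 by algebra
  show ?case using a b by simp
next
  case (Suc j)
  have e: "ew L M w (Suc j) = 1" using Suc unfolding ew_def by auto
  have IH: "T (ew L M w) (Suc j) p = p^(2*j)*p^4 - 1 - of_real L * (p^(2*j)*p^2 - p^2)"
       "T (ew L M w) (Suc (Suc j)) p = p^(2*j)*p^6 - 1 - of_real L * (p^(2*j)*p^4 - p^2)" using Suc by auto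
  have "T (ew L M w) (Suc (Suc (Suc j))) p = p^(2*j)*p^8 - 1 - of_real L * (p^(2*j)*p^6 - p^2)"
    unfolding T_rec[OF p, of _ "Suc j"] IH e of_real_1 by algebra
  moreover have "p ^ (2 * j) * p ^ 6 - 1 - of_real L * (p ^ (2 * j) * p ^ 4 - p^2)
     = p ^ (2 * j) * p^2 * p ^ 4 - 1 - of_real L * (p ^ (2 * j) * p^2 * p^2 - p^2)"
    "p ^ (2 * j) * p ^ 8 - 1 - of_real L * (p ^ (2 * j) * p ^ 6 - p^2)
     = p ^ (2 * j) * p^2 * p ^ 6 - 1 - of_real L * (p ^ (2 * j) * p^2 * p^4 - p^2)" by algebra+
  ultimately show ?case using IH unfolding pS by simp
qed

lemma T_final:
  assumes p: "p \<noteq> 0" and w: "w > 0"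
  shows "T (ew L M w) (Suc w) p =
     - ((1 - of_real L*p^2)*(1 - of_real M*p^2) - (of_real L - p^2)*(of_real M - p^2)*p^(2*w))"
proof (cases "w = 1")
  case True
  have e0: "ew L M w 0 = (1 + L)*(1+M)" using True unfolding ew_def by auto
  have s2: "2 * Suc 0 = 2" by simp
  show ?thesis unfolding True One_nat_def T2[OF p] e0[unfolded True One_nat_def] s2 of_real_mult of_real_add of_real_1 by algebra
next
  case False
  define j where "j = w - 2"
  have j: "w = Suc (Suc j)" using w False unfolding j_def by simp
  have e: "ew L M w (Suc j) = 1 + M" using j unfolding ew_def by auto
  have C: "T (ew L M w) (Suc j) p = p^(2*j)*p^4 - 1 - of_real L * (p^(2*j)*p^2 - p^2)"
       "T (ew L M w) (Suc (Suc j)) p = p^(2*j)*p^6 - 1 - of_real L * (p^(2*j)*p^4 - p^2)"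
    using T_closed[OF p, of j w L M] j by auto
  have R: "T (ew L M w) (Suc w) p = (p^2+1) * T (ew L M w) (Suc (Suc j)) p - of_real (ew L M w (Suc j)) * p^2 * T (ew L M w) (Suc j) p"
    using T_rec[OF p, of "ew L M w" "Suc j"] j by simp
  have pw: "p^(2*w) = p^(2*j)*p^4" unfolding j pS by simp
  show ?thesis unfolding R C e pw of_real_add of_real_1 by algebra
qed


lemma poly_D: "poly (Dpoly lam mu w) q =
   (1 - of_real (lam^2)*q^2)*(1 - of_real (mu^2)*q^2) - (of_real (lam^2) - q^2)*(of_real (mu^2) - q^2)*q^(2*w)"
  unfolding Dpoly_def by (simp add: poly_monom) algebra

lemma D_nz: assumes "w > 0" shows "Dpoly lam mu w \<noteq> 0"
proof
  assume "Dpoly lam mu w = 0"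
  then have "poly (Dpoly lam mu w) 0 = 0" by simp
  moreover have "poly (Dpoly lam mu w) 0 = 1"
    unfolding poly_D using assms by (cases w) auto
  ultimately show False by simp
qed

lemma D_deriv_formula: "poly (pderiv (Dpoly lam mu w)) q =
   - 2*of_real (lam^2)*q*(1 - of_real (mu^2)*q^2) - 2*of_real (mu^2)*q*(1 - of_real (lam^2)*q^2)
   + 2*q*(of_real (mu^2) - q^2)*q^(2*w) + 2*q*(of_real (lam^2) - q^2)*q^(2*w)
   - (of_real (lam^2) - q^2)*(of_real (mu^2) - q^2)*(of_nat (2*w)*q^(2*w-1))"
proof -
  have "((\<lambda>q. poly (Dpoly lam mu w) q) has_field_derivative
   - 2*of_real (lam^2)*q*(1 - of_real (mu^2)*q^2) - 2*of_real (mu^2)*q*(1 - of_real (lam^2)*q^2)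
   + 2*q*(of_real (mu^2) - q^2)*q^(2*w) + 2*q*(of_real (lam^2) - q^2)*q^(2*w)
   - (of_real (lam^2) - q^2)*(of_real (mu^2) - q^2)*(of_nat (2*w)*q^(2*w-1))) (at q)"
    unfolding poly_D
    by (rule derivative_eq_intros refl | simp)+ (simp add: algebra_simps power2_eq_square)
  then show ?thesis using DERIV_unique poly_DERIV by blast
qed


lemma sumsq_pos:
  assumes "\<And>j. e j > 0"
  shows "(\<Sum>k\<le>m. P e k a * cnj (P e k a) / of_real (gam e k)) = of_real (\<Sum>k\<le>m. (cmod (P e k a))^2 / gam e k)"
    and "(\<Sum>k\<le>m. (cmod (P e k a))^2 / gam e k) > 0"
proof -
  show "(\<Sum>k\<le>m. P e k a * cnj (P e k a) / of_real (gam e k)) = of_real (\<Sum>k\<le>m. (cmod (P e k a))^2 / gam e k)"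
    unfolding of_real_sum by (rule sum.cong) (auto simp: complex_norm_square[symmetric])
  have "(cmod (P e 0 a))^2 / gam e 0 \<le> (\<Sum>k\<le>m. (cmod (P e k a))^2 / gam e k)"
    by (rule member_le_sum) (auto intro!: divide_nonneg_pos gam_pos assms)
  moreover have "(cmod (P e 0 a))^2 / gam e 0 = 1" by (simp add: gam_def)
  ultimately show "(\<Sum>k\<le>m. (cmod (P e k a))^2 / gam e k) > 0" by simp
qed

lemma simple_root:
  assumes w: "w > 0" and r: "poly (Dpoly lam mu w) p = 0" and p1: "p \<noteq> 1" and p2: "p \<noteq> -1"
  shows "poly (pderiv (Dpoly lam mu w)) p \<noteq> 0"
proof -
  define e where "e = ew (lam^2) (mu^2) w"
  have epos: "\<And>j. e j > 0" unfolding e_def by (rule ew_pos) auto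
  have Tf: "\<And>q. q \<noteq> 0 \<Longrightarrow> T e (Suc w) q = - poly (Dpoly lam mu w) q"
    unfolding e_def poly_D using T_final w by simp
  have p0: "p \<noteq> 0"
  proof
    assume "p = 0"
    then have "poly (Dpoly lam mu w) p = 1" unfolding poly_D using w by (cases w) auto
    then show False using r by simp
  qed
  have pp: "p^2 - 1 \<noteq> 0" using p1 p2 by (simp add: power2_eq_1_iff)
  define z where "z = p + 1/p"
  have "T e (Suc w) p = 0" using Tf[OF p0] r by simp
  then have Pz: "P e (Suc w) z = 0" unfolding T_def z_def using pp p0 by simp
  have S1: "(z - cnj z) * (\<Sum>k\<le>w. P e k z * cnj (P e k z) / of_real (gam e k)) = 0"
    using CD1[of e, OF epos, where a=z and b="cnj z" and m=w] unfolding P_cnj Pz by simp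
  define X where "X = (\<Sum>k\<le>w. (cmod (P e k z))^2 / gam e k)"
  have SX: "(\<Sum>k\<le>w. P e k z * cnj (P e k z) / of_real (gam e k)) = of_real X"
    unfolding X_def by (rule sumsq_pos(1)) (rule epos)
  have X0: "X > 0" unfolding X_def by (rule sumsq_pos(2)) (rule epos)
  have zr: "z = cnj z"
    using S1 X0 unfolding SX by simp
  have S2: "(\<Sum>k\<le>w. P e k z * P e k z / of_real (gam e k)) = (\<Sum>k\<le>w. P e k z * cnj (P e k z) / of_real (gam e k))"
    using zr by (metis P_cnj)
  have "(Pd e (Suc w) z * P e w z - Pd e w z * P e (Suc w) z) / of_real (gam e w) \<noteq> 0"
    using CD2[of e, OF epos, where a=z and m=w] S2 SX X0 by auto
  then have Pdz: "Pd e (Suc w) z \<noteq> 0" using Pz by auto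
  have dz: "((\<lambda>q. q + 1/q) has_field_derivative (1 - 1/p^2)) (at p)"
    using p0 by (auto intro!: derivative_eq_intros simp: field_simps power2_eq_square)
  have dP: "((\<lambda>q. P e (Suc w) (q + 1/q)) has_field_derivative Pd e (Suc w) z * (1 - 1/p^2)) (at p)"
    unfolding z_def by (rule DERIV_chain2[OF P_deriv dz])
  define c where "c = (of_nat 2 * (1 * p^(2 - Suc 0)) - 0) * p^(Suc w) + (of_nat (Suc w) * (1 * p^(Suc w - Suc 0))) * (p^2 - 1)"
  have dF: "((\<lambda>q. (q^2 - 1) * q^(Suc w)) has_field_derivative c) (at p)"
    unfolding c_def by (intro DERIV_mult DERIV_diff DERIV_power[OF DERIV_ident] DERIV_const)
  have dT: "((\<lambda>q. T e (Suc w) q) has_field_derivative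
      c * P e (Suc w) z + Pd e (Suc w) z * (1 - 1/p^2) * ((p^2 - 1) * p^(Suc w))) (at p)"
    unfolding T_def z_def[symmetric] using DERIV_mult[OF dF dP] unfolding z_def by simp
  have dD: "((\<lambda>q. poly (Dpoly lam mu w) q) has_field_derivative
      - (Pd e (Suc w) z * (1 - 1/p^2) * ((p^2 - 1) * p^(Suc w)))) (at p)"
  proof (rule has_field_derivative_transform_within_open[of _ _ p "-{0}"])
    show "((\<lambda>q. - T e (Suc w) q) has_field_derivative - (Pd e (Suc w) z * (1 - 1/p^2) * ((p^2 - 1) * p^(Suc w)))) (at p)"
      using DERIV_minus[OF dT] unfolding Pz by simp
  qed (use p0 Tf in auto)
  have "poly (pderiv (Dpoly lam mu w)) p = - (Pd e (Suc w) z * (1 - 1/p^2) * ((p^2 - 1) * p^(Suc w)))"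
    using DERIV_unique[OF poly_DERIV dD] .
  moreover have "1 - 1/p^2 \<noteq> 0" using pp p0 by (simp add: field_simps)
  ultimately show ?thesis using Pdz pp p0 by simp
qed


lemma order_one:
  assumes w: "w > 0" and r: "poly (Dpoly lam mu w) p = 0" and p1: "p \<noteq> 1" and p2: "p \<noteq> -1"
  shows "order p (Dpoly lam mu w) = 1"
proof -
  have "order p (Dpoly lam mu w) = Suc (order p (pderiv (Dpoly lam mu w)))"
    by (rule order_pderiv[OF D_nz[OF w] r])
  moreover have "order p (pderiv (Dpoly lam mu w)) = 0"
    by (rule order_0I) (rule simple_root[OF w r p1 p2])
  ultimately show ?thesis by simp
qed

lemma deriv_zero:
  assumes w: "w > 0" and o: "order a (Dpoly lam mu w) \<ge> 2"
  shows "poly (pderiv (Dpoly lam mu w)) a = 0"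
proof -
  have r: "poly (Dpoly lam mu w) a = 0" using o order_root[of "Dpoly lam mu w" a] by auto
  have "order a (Dpoly lam mu w) = Suc (order a (pderiv (Dpoly lam mu w)))"
    by (rule order_pderiv[OF D_nz[OF w] r])
  then have "order a (pderiv (Dpoly lam mu w)) \<noteq> 0" using o by simp
  then show ?thesis using order_root by blast
qed

lemma deriv_at_1: "poly (pderiv (Dpoly lam mu w)) 1 =
   of_real (4*(lam^2*mu^2 - 1) - 2 * real w * (lam^2 - 1)*(mu^2 - 1))"
  unfolding D_deriv_formula by (simp add: algebra_simps)

lemma deriv_at_m1: assumes "w > 0" shows "poly (pderiv (Dpoly lam mu w)) (-1) =
   - of_real (4*(lam^2*mu^2 - 1) - 2 * real w * (lam^2 - 1)*(mu^2 - 1))"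
proof -
  have o: "odd (2*w - 1)" using assms by presburger
  have "(-1::complex)^(2*w-1) = -1" using o by simp
  moreover have "(-1::complex)^(2*w) = 1" by simp
  ultimately show ?thesis unfolding D_deriv_formula by (simp add: algebra_simps)
qed

lemma multi_eq:
  assumes w: "w > 0" and o: "order 1 (Dpoly lam mu w) \<ge> 2 \<or> order (-1) (Dpoly lam mu w) \<ge> 2"
  shows "4*(lam^2*mu^2 - 1) - 2 * real w * (lam^2 - 1)*(mu^2 - 1) = 0"
proof -
  define X where "X = 4*(lam^2*mu^2 - 1) - 2 * real w * (lam^2 - 1)*(mu^2 - 1)"
  have "complex_of_real X = 0"
    using o
  proof
    assume "order 1 (Dpoly lam mu w) \<ge> 2"
    then have "poly (pderiv (Dpoly lam mu w)) 1 = 0" by (rule deriv_zero[OF w])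
    then show ?thesis using deriv_at_1[of lam mu w] unfolding X_def by simp
  next
    assume "order (-1) (Dpoly lam mu w) \<ge> 2"
    then have "poly (pderiv (Dpoly lam mu w)) (-1) = 0" by (rule deriv_zero[OF w])
    then show ?thesis using deriv_at_m1[OF w, of lam mu] unfolding X_def by simp
  qed
  then show ?thesis unfolding X_def of_real_eq_0_iff .
qed


theorem mainTheorem1:
  fixes lam mu :: real
  assumes "lam \<ge> 0" and "mu \<ge> 0" and "(lam, mu) \<noteq> (1, 1)"
  shows "(\<forall>w::nat. w > 0 \<longrightarrow>
            (\<forall>z::complex. poly (Dpoly lam mu w) z = 0 \<and> z \<noteq> 1 \<and> z \<noteq> -1
               \<longrightarrow> order z (Dpoly lam mu w) = 1))
       \<and> (\<forall>w1 w2::nat.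
            w1 > 0 \<and> (order 1 (Dpoly lam mu w1) \<ge> 2 \<or> order (-1) (Dpoly lam mu w1) \<ge> 2) \<and>
            w2 > 0 \<and> (order 1 (Dpoly lam mu w2) \<ge> 2 \<or> order (-1) (Dpoly lam mu w2) \<ge> 2)
            \<longrightarrow> w1 = w2)"
proof (intro conjI allI impI)
  fix w :: nat and z :: complex
  assume "w > 0" "poly (Dpoly lam mu w) z = 0 \<and> z \<noteq> 1 \<and> z \<noteq> -1"
  then show "order z (Dpoly lam mu w) = 1" using order_one by blast
next
  fix w1 w2 :: nat
  assume h: "w1 > 0 \<and> (order 1 (Dpoly lam mu w1) \<ge> 2 \<or> order (-1) (Dpoly lam mu w1) \<ge> 2) \<and>
            w2 > 0 \<and> (order 1 (Dpoly lam mu w2) \<ge> 2 \<or> order (-1) (Dpoly lam mu w2) \<ge> 2)"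
  have e1: "4*(lam^2*mu^2 - 1) - 2 * real w1 * (lam^2 - 1)*(mu^2 - 1) = 0"
    using h multi_eq by blast
  have e2: "4*(lam^2*mu^2 - 1) - 2 * real w2 * (lam^2 - 1)*(mu^2 - 1) = 0"
    using h multi_eq by blast
  show "w1 = w2"
  proof (cases "(lam^2 - 1)*(mu^2 - 1) = 0")
    case True
    then have "2 * real w1 * (lam^2 - 1)*(mu^2 - 1) = 0" by (simp add: mult.assoc)
    then have "lam^2*mu^2 = 1" using e1 by (simp add: algebra_simps)
    moreover have "lam^2 = 1 \<or> mu^2 = 1" using True by simp
    ultimately have "lam^2 = 1 \<and> mu^2 = 1" by auto
    then have "lam = 1 \<and> mu = 1" using assms(1,2) by (simp add: power2_eq_1_iff)
    then show ?thesis using assms(3) by simp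
  next
    case False
    have "real w1 * ((lam^2 - 1)*(mu^2 - 1)) = real w2 * ((lam^2 - 1)*(mu^2 - 1))"
      using e1 e2 by (simp add: algebra_simps)
    then show ?thesis using False by simp
  qed
qed

end
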